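(* Let $k\ge1$, $1\le r\le(2k+1)^2$, $\mathcal{B}=\mathcal{B}(2k+1,2k+1;r)$ and $G=D_4$. Then \[|\mathcal{O}_G(\mathcal{B})|=\frac18\left(\binom{(2k+1)^2}{r}+2\binom{k(k+1)}{\frac r4}+2\binom{k(k+1)}{\frac{r-1}{4}}+\binom{2k(k+1)}{\lfloor\frac r2\rfloor}+4\sum_{t=0}^{r}\binom{2k+1}{t}\binom{k(2k+1)}{\frac{r-t}{2}}\right).\]
   Context: $\mathcal{B}(2k+1,2k+1;r)$ is the set of all subsets of exactly $r$ cells (boards with $r$ blocked cells) of a $(2k+1)\times(2k+1)$ grid. The dihedral group $D_4$ of the 8 symmetries of the square (four rotations about the center and reflections across the horizontal midline, vertical midline and both diagonals) acts on boards; $\mathcal{O}_G(\mathcal{B})$ is the set of orbits (equivalence classes). Convention: a binomial coefficient $\binom{a}{b}$ is $0$ when $b$ is not a nonnegative integer or $b>a$. *)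

theory Defs
  imports Complex_Main
begin

definition grid :: "nat \<Rightarrow> (nat \<times> nat) set" where
  "grid n = {0..<n} \<times> {0..<n}"

definition boards :: "nat \<Rightarrow> nat \<Rightarrow> (nat \<times> nat) set set" where
  "boards n r = {B. B \<subseteq> grid n \<and> card B = r}"

definition D4 :: "nat \<Rightarrow> ((nat \<times> nat) \<Rightarrow> (nat \<times> nat)) set" where
  "D4 n = {
     (\<lambda>(i,j). (i, j)),
     (\<lambda>(i,j). (j, n - 1 - i)),
     (\<lambda>(i,j). (n - 1 - i, n - 1 - j)),
     (\<lambda>(i,j). (n - 1 - j, i)),
     (\<lambda>(i,j). (n - 1 - i, j)),
     (\<lambda>(i,j). (i, n - 1 - j)),
     (\<lambda>(i,j). (j, i)),
     (\<lambda>(i,j). (n - 1 - j, n - 1 - i))}"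

definition orbit :: "nat \<Rightarrow> (nat \<times> nat) set \<Rightarrow> (nat \<times> nat) set set" where
  "orbit n B = (\<lambda>g. g ` B) ` D4 n"

definition orbits :: "nat \<Rightarrow> nat \<Rightarrow> (nat \<times> nat) set set set" where
  "orbits n r = orbit n ` boards n r"

(* Binomial coefficient with a rational lower argument; 0 unless the lower
   argument is a nonnegative integer (and a choose b = 0 for b > a). *)
definition binq :: "nat \<Rightarrow> rat \<Rightarrow> nat" where
  "binq a b = (if b \<in> \<int> \<and> b \<ge> 0 then a choose (nat \<lfloor>b\<rfloor>) else 0)"

end

theory Submission
  imports "HOL-Algebra.Group_Action" Defs
begin

lemma card_Union_L:
  assumes "finite U" "\<Union>Q \<subseteq> U" "\<forall>c\<in>Q. card c = L" "pairwise disjnt Q"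
  shows "card (\<Union>Q) = L * card Q"
proof -
  have "card (\<Union>Q) = sum card Q"
  proof (rule card_Union_disjoint[OF assms(4)])
    fix A assume "A \<in> Q"
    hence "A \<subseteq> U" using assms(2) by blast
    thus "finite A" using assms(1) by (rule finite_subset)
  qed
  also have "\<dots> = sum (\<lambda>_. L) Q" using assms(3) by simp
  finally show ?thesis by simp
qed

lemma count_unions:
  fixes U Fx :: "'a set" and Q :: "'a set set"
  assumes fU: "finite U" and FU: "Fx \<subseteq> U" and QU: "\<Union>Q = U - Fx"
    and cL: "\<forall>c\<in>Q. card c = L" and L: "L > 0" and dj: "pairwise disjnt Q"
  shows "card {B. B \<subseteq> U \<and> card B = r \<and> (\<forall>c\<in>Q. c \<subseteq> B \<or> c \<inter> B = {})}
     = (\<Sum>t=0..r. (card Fx choose t) * card {Q'. Q' \<subseteq> Q \<and> L * card Q' = r - t})"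
proof -
  have fQ: "finite Q" using finite_UnionD[of Q] QU fU by simp
  have fF: "finite Fx" using finite_subset[OF FU fU] .
  have cU: "card (\<Union>Q') = L * card Q'" if "Q' \<subseteq> Q" for Q'
  proof -
    have "\<Union>Q' \<subseteq> U" using that QU by blast
    moreover have "\<forall>c\<in>Q'. card c = L" using that cL by blast
    ultimately show ?thesis using card_Union_L[OF fU _ _ pairwise_subset[OF dj that]] by blast
  qed
  have finUQ: "finite (\<Union>Q')" if "Q' \<subseteq> Q" for Q'
  proof -
    have "\<Union>Q' \<subseteq> U" using that QU by blast
    thus ?thesis using fU by (rule finite_subset)
  qed
  have ne: "c \<noteq> {}" if "c \<in> Q" for c using cL L that by fastforce
  define A where "A t = {S. S \<subseteq> Fx \<and> card S = t}" for t
  define C where "C t = {Q'. Q' \<subseteq> Q \<and> L * card Q' = r - t}" for t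
  define D where "D = (\<Union>t\<in>{0..r}. A t \<times> C t)"
  define f :: "'a set \<times> 'a set set \<Rightarrow> 'a set" where "f = (\<lambda>(S, Q'). S \<union> \<Union>Q')"
  define T where "T = {B. B \<subseteq> U \<and> card B = r \<and> (\<forall>c\<in>Q. c \<subseteq> B \<or> c \<inter> B = {})}"
  have finA: "finite (A t)" for t unfolding A_def using fF by (auto intro: finite_subset[of _ "Pow Fx"])
  have finC: "finite (C t)" for t unfolding C_def using fQ by (auto intro: finite_subset[of _ "Pow Q"])
  have cardD: "card D = (\<Sum>t=0..r. (card Fx choose t) * card (C t))"
  proof -
    have "card D = (\<Sum>t=0..r. card (A t \<times> C t))" unfolding D_def
      by (rule card_UN_disjoint) (auto simp: finA[unfolded A_def] finC A_def)
    also have "\<dots> = (\<Sum>t=0..r. (card Fx choose t) * card (C t))"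
      by (simp add: card_cartesian_product A_def n_subsets fF)
    finally show ?thesis .
  qed
  have disjSQ: "S \<inter> \<Union>Q' = {}" if "S \<subseteq> Fx" "Q' \<subseteq> Q" for S Q' using that QU by blast
  have inj: "inj_on f D"
  proof (rule inj_onI)
    fix p1 p2 assume p1: "p1 \<in> D" and p2: "p2 \<in> D" and e: "f p1 = f p2"
    obtain S1 Q1 where p1e: "p1 = (S1, Q1)" by (cases p1)
    obtain S2 Q2 where p2e: "p2 = (S2, Q2)" by (cases p2)
    have h1: "S1 \<subseteq> Fx" "Q1 \<subseteq> Q" using p1 by (auto simp: p1e D_def A_def C_def)
    have h2: "S2 \<subseteq> Fx" "Q2 \<subseteq> Q" using p2 by (auto simp: p2e D_def A_def C_def)
    have e': "S1 \<union> \<Union>Q1 = S2 \<union> \<Union>Q2" using e by (simp add: f_def p1e p2e)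
    have "S1 = (S1 \<union> \<Union>Q1) \<inter> Fx" using h1 QU by blast
    also have "\<dots> = (S2 \<union> \<Union>Q2) \<inter> Fx" using e' by simp
    also have "\<dots> = S2" using h2 QU by blast
    finally have S: "S1 = S2" .
    have key: "Q1 \<subseteq> Q2" if a: "S1 \<union> \<Union>Q1 = S2 \<union> \<Union>Q2" "S1 \<subseteq> Fx" "Q1 \<subseteq> Q" "S2 \<subseteq> Fx" "Q2 \<subseteq> Q"
      for S1 S2 Q1 Q2
    proof
      fix c assume c: "c \<in> Q1"
      then obtain z where z: "z \<in> c" using ne a(3) by blast
      have "z \<in> S2 \<union> \<Union>Q2" using a(1) z c by blast
      moreover have "z \<notin> Fx" using z c a(3) QU by blast
      ultimately obtain c' where c': "c' \<in> Q2" "z \<in> c'" using a(4) by blast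
      have "c = c'" using dj c c' z a(3,5) unfolding pairwise_def disjnt_def by blast
      thus "c \<in> Q2" using c' by simp
    qed
    have "Q1 = Q2" using key[OF e' h1 h2] key[OF e'[symmetric] h2 h1] by blast
    thus "p1 = p2" using S p1e p2e by simp
  qed
  have img: "f ` D = T"
  proof
    show "f ` D \<subseteq> T"
    proof
      fix B assume "B \<in> f ` D"
      then obtain S Q' t where t: "t \<in> {0..r}" and S: "S \<subseteq> Fx" "card S = t"
        and Q': "Q' \<subseteq> Q" "L * card Q' = r - t" and B: "B = S \<union> \<Union>Q'"
        by (auto simp: D_def A_def C_def f_def)
      have "B \<subseteq> U" using S Q' B FU QU by blast
      moreover have "card B = r"
      proof -
        have "card B = card S + card (\<Union>Q')" unfolding B
          by (rule card_Un_disjoint[OF finite_subset[OF S(1) fF] finUQ[OF Q'(1)] disjSQ[OF S(1) Q'(1)]])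
        thus ?thesis using cU[OF Q'(1)] S Q' t by simp
      qed
      moreover have "\<forall>c\<in>Q. c \<subseteq> B \<or> c \<inter> B = {}"
      proof
        fix c assume c: "c \<in> Q"
        show "c \<subseteq> B \<or> c \<inter> B = {}"
        proof (cases "c \<inter> B = {}")
          case False
          then obtain z where z: "z \<in> c" "z \<in> B" by blast
          have "z \<notin> Fx" using z c QU by blast
          then obtain c' where c': "c' \<in> Q'" "z \<in> c'" using z B S by blast
          have "c = c'" using dj c c' z Q' unfolding pairwise_def disjnt_def by blast
          thus ?thesis using c' B by blast
        qed simp
      qed
      ultimately show "B \<in> T" by (simp add: T_def)
    qed
    show "T \<subseteq> f ` D"
    proof
      fix B assume B: "B \<in> T"
      define S where "S = B \<inter> Fx"
      define Q' where "Q' = {c\<in>Q. c \<subseteq> B}"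
      have BU: "B \<subseteq> U" and cB: "card B = r" and uc: "\<forall>c\<in>Q. c \<subseteq> B \<or> c \<inter> B = {}"
        using B by (auto simp: T_def)
      have Be: "B = S \<union> \<Union>Q'"
      proof
        show "B \<subseteq> S \<union> \<Union>Q'"
        proof
          fix z assume z: "z \<in> B"
          show "z \<in> S \<union> \<Union>Q'"
          proof (cases "z \<in> Fx")
            case False
            then obtain c where c: "c \<in> Q" "z \<in> c" using QU z BU by blast
            hence "c \<subseteq> B" using uc z by blast
            thus ?thesis using c by (auto simp: Q'_def)
          qed (simp add: S_def z)
        qed
        show "S \<union> \<Union>Q' \<subseteq> B" by (auto simp: S_def Q'_def)
      qed
      have Q'Q: "Q' \<subseteq> Q" by (auto simp: Q'_def)
      have SF: "S \<subseteq> Fx" by (auto simp: S_def)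
      have "card B = card S + card (\<Union>Q')" 
        by (subst Be, rule card_Un_disjoint[OF finite_subset[OF SF fF] finUQ[OF Q'Q] disjSQ[OF SF Q'Q]])
      hence r: "r = card S + L * card Q'" using cB cU[OF Q'Q] by simp
      have "(S, Q') \<in> D" unfolding D_def A_def C_def using r SF Q'Q
        by (intro UN_I[of "card S"]) auto
      thus "B \<in> f ` D" using Be by (auto simp: f_def intro!: image_eqI[of _ _ "(S, Q')"])
    qed
  qed
  have "card T = card D" using card_image[OF inj] img by simp
  thus ?thesis using cardD by (simp add: T_def C_def)
qed

lemma card_C:
  assumes L: "L > 0" and fQ: "finite Q"
  shows "card {Q'. Q' \<subseteq> Q \<and> L * card Q' = m} = binq (card Q) (of_nat m / of_nat L)"
proof (cases "L dvd m")
  case True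
  then obtain d where d: "m = L * d" by blast
  have "{Q'. Q' \<subseteq> Q \<and> L * card Q' = m} = {Q'. Q' \<subseteq> Q \<and> card Q' = d}" using d L by auto
  moreover have "(of_nat m / of_nat L :: rat) = of_nat d" using d L by simp
  ultimately show ?thesis by (simp add: n_subsets fQ binq_def)
next
  case False
  have E: "{Q'. Q' \<subseteq> Q \<and> L * card Q' = m} = {}" using False by auto
  have nZ: "(of_nat m / of_nat L :: rat) \<notin> \<int>"
  proof
    assume "(of_nat m / of_nat L :: rat) \<in> \<int>"
    then obtain z where z: "(of_nat m / of_nat L :: rat) = of_int z" by (auto elim: Ints_cases)
    hence "(of_nat m :: rat) = of_int z * of_nat L" using L by (simp add: divide_eq_eq)
    hence "int m = z * int L" by (metis of_int_eq_iff of_int_mult of_int_of_nat_eq)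
    hence "int L dvd int m" by simp
    thus False using False by simp
  qed
  show ?thesis unfolding E using nZ by (simp add: binq_def)
qed

lemma funpow_in: "\<forall>x\<in>U. g x \<in> U \<Longrightarrow> x \<in> U \<Longrightarrow> (g^^j) x \<in> U"
  by (induction j) auto

lemma funpow_mult_id: "\<forall>x\<in>U. g x \<in> U \<Longrightarrow> \<forall>x\<in>U. (g^^L) x = x \<Longrightarrow> x \<in> U \<Longrightarrow> (g^^(a*L)) x = x"
proof (induction a)
  case (Suc a)
  have e: "Suc a * L = L + a * L" by simp
  have "(g^^(Suc a * L)) x = (g^^L) ((g^^(a*L)) x)" unfolding e by (simp only: funpow_add comp_apply)
  thus ?case using Suc by simp
qed simp

lemma funpow_mod: "\<forall>x\<in>U. g x \<in> U \<Longrightarrow> \<forall>x\<in>U. (g^^L) x = x \<Longrightarrow> x \<in> U \<Longrightarrow> (g^^m) x = (g^^(m mod L)) x"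
proof -
  assume a: "\<forall>x\<in>U. g x \<in> U" "\<forall>x\<in>U. (g^^L) x = x" "x \<in> U"
  have "(g^^m) x = (g^^(m mod L + (m div L) * L)) x" by simp
  also have "\<dots> = (g^^(m mod L)) ((g^^((m div L) * L)) x)" by (simp only: funpow_add comp_apply)
  also have "\<dots> = (g^^(m mod L)) x" using funpow_mult_id[OF a] by simp
  finally show ?thesis .
qed

lemma fix_count:
  fixes g :: "'a \<Rightarrow> 'a"
  assumes fU: "finite U" and gU: "\<forall>x\<in>U. g x \<in> U" and inj: "inj_on g U" and L: "L > 0"
    and gL: "\<forall>x\<in>U. (g^^L) x = x"
    and cls: "\<forall>x\<in>U. g x \<noteq> x \<longrightarrow> card ((\<lambda>j. (g^^j) x) ` {..<L}) = L"
  shows "card {B. B \<subseteq> U \<and> card B = r \<and> g ` B = B} =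
    (\<Sum>t=0..r. (card {x\<in>U. g x = x} choose t) *
        binq ((card U - card {x\<in>U. g x = x}) div L) ((of_nat r - of_nat t) / of_nat L))"
proof -
  define Fx where "Fx = {x\<in>U. g x = x}"
  define cl where "cl x = (\<lambda>j. (g^^j) x) ` {..<L}" for x
  define Q where "Q = cl ` (U - Fx)"
  have pU: "x \<in> U \<Longrightarrow> (g^^j) x \<in> U" for x j using funpow_in[OF gU] by blast
  have pmod: "x \<in> U \<Longrightarrow> (g^^m) x = (g^^(m mod L)) x" for x m using funpow_mod[OF gU gL] by blast
  have cl_mem: "x \<in> U \<Longrightarrow> (g^^m) x \<in> cl x" for x m
    unfolding cl_def using pmod[of x m] L by (auto intro!: image_eqI[of _ _ "m mod L"])
  have cl_self: "x \<in> cl x" for x unfolding cl_def using L by (auto intro!: image_eqI[of _ _ 0])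
  have cl_eq: "cl y = cl x" if x: "x \<in> U" and y: "y \<in> cl x" for x y
  proof -
    obtain a where a: "a < L" "y = (g^^a) x" using y by (auto simp: cl_def)
    have yU: "y \<in> U" using a pU x by simp
    show ?thesis
    proof
      show "cl y \<subseteq> cl x"
      proof
        fix z assume "z \<in> cl y"
        then obtain j where "z = (g^^j) y" by (auto simp: cl_def)
        hence "z = (g^^(j+a)) x" using a by (simp add: funpow_add)
        thus "z \<in> cl x" using cl_mem x by simp
      qed
      show "cl x \<subseteq> cl y"
      proof
        fix z assume "z \<in> cl x"
        then obtain i where i: "i < L" "z = (g^^i) x" by (auto simp: cl_def)
        have ia: "i + L = (i + L - a) + a" using a by simp
        have "(g^^(i + L)) x = (g^^(i + L - a)) y"
          by (subst ia) (simp only: funpow_add comp_apply a(2))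
        hence "(g^^(i + L - a)) y = (g^^(i + L)) x" by simp
        also have "\<dots> = (g^^((i + L) mod L)) x" using pmod x by blast
        also have "\<dots> = (g^^(i mod L)) x" by simp
        also have "\<dots> = z" using i by simp
        finally show "z \<in> cl y" using cl_mem[OF yU, of "i + L - a"] by simp
      qed
    qed
  qed
  have fixed: "x \<in> U \<Longrightarrow> g x = x \<Longrightarrow> (g^^j) x = x" for x j by (induction j) auto
  have clFx: "y \<in> U - Fx" if x: "x \<in> U - Fx" and y: "y \<in> cl x" for x y
  proof -
    obtain a where a: "y = (g^^a) x" using y by (auto simp: cl_def)
    have yU: "y \<in> U" using a pU x by simp
    show ?thesis
    proof (rule ccontr)
      assume "y \<notin> U - Fx"
      hence gy: "g y = y" using yU by (simp add: Fx_def)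
      have "cl y = {y}" unfolding cl_def using fixed[OF yU gy] L by auto
      hence "x = y" using cl_eq[of x y] x y cl_self[of x] by auto
      thus False using gy x by (simp add: Fx_def)
    qed
  qed
  have QU: "\<Union>Q = U - Fx" unfolding Q_def using clFx cl_self by blast
  have cL: "\<forall>c\<in>Q. card c = L" unfolding Q_def cl_def using cls by (auto simp: Fx_def)
  have dj: "pairwise disjnt Q"
    unfolding pairwise_def disjnt_def Q_def
  proof (intro ballI impI)
    fix c1 c2 assume c1: "c1 \<in> cl ` (U - Fx)" and c2: "c2 \<in> cl ` (U - Fx)" and ne: "c1 \<noteq> c2"
    obtain x1 where x1: "x1 \<in> U - Fx" "c1 = cl x1" using c1 by blast
    obtain x2 where x2: "x2 \<in> U - Fx" "c2 = cl x2" using c2 by blast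
    show "c1 \<inter> c2 = {}"
    proof (rule ccontr)
      assume "c1 \<inter> c2 \<noteq> {}"
      then obtain z where "z \<in> cl x1" "z \<in> cl x2" using x1 x2 by blast
      hence "cl x1 = cl x2" using cl_eq[of x1 z] cl_eq[of x2 z] x1 x2 by simp
      thus False using ne x1 x2 by simp
    qed
  qed
  have FU: "Fx \<subseteq> U" by (auto simp: Fx_def)
  have fQ: "finite Q" unfolding Q_def by (rule finite_imageI[OF finite_Diff[OF fU]])
  have "card (U - Fx) = L * card Q" using card_Union_L[OF fU _ cL dj] QU by simp
  hence cQ: "card Q = (card U - card Fx) div L"
    using L card_Diff_subset[OF finite_subset[OF FU fU] FU] by simp
  have seteq: "{B. B \<subseteq> U \<and> card B = r \<and> g ` B = B} =
     {B. B \<subseteq> U \<and> card B = r \<and> (\<forall>c\<in>Q. c \<subseteq> B \<or> c \<inter> B = {})}"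
  proof (intro Collect_cong iffI conjI)
    fix B assume B: "B \<subseteq> U \<and> card B = r \<and> g ` B = B"
    thus "B \<subseteq> U" "card B = r" by auto
    have pj: "(g^^j) ` B = B" for j
    proof (induction j)
      case (Suc j)
      have "(g^^Suc j) ` B = g ` ((g^^j) ` B)" by (simp add: image_comp)
      thus ?case using Suc B by simp
    qed simp
    show "\<forall>c\<in>Q. c \<subseteq> B \<or> c \<inter> B = {}"
    proof
      fix c assume c: "c \<in> Q"
      then obtain x where x: "x \<in> U - Fx" "c = cl x" by (auto simp: Q_def)
      show "c \<subseteq> B \<or> c \<inter> B = {}"
      proof (cases "c \<inter> B = {}")
        case False
        then obtain z where z: "z \<in> c" "z \<in> B" by blast
        have "c = cl z" using cl_eq[of x z] x z by simp
        moreover have "cl z \<subseteq> B" unfolding cl_def using pj z by blast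
        ultimately show ?thesis by simp
      qed simp
    qed
  next
    fix B assume B: "B \<subseteq> U \<and> card B = r \<and> (\<forall>c\<in>Q. c \<subseteq> B \<or> c \<inter> B = {})"
    thus "B \<subseteq> U" "card B = r" by auto
    have sub: "g ` B \<subseteq> B"
    proof
      fix y assume "y \<in> g ` B"
      then obtain x where x: "x \<in> B" "y = g x" by blast
      show "y \<in> B"
      proof (cases "g x = x")
        case False
        hence "cl x \<in> Q" using x B by (auto simp: Q_def Fx_def)
        hence "cl x \<subseteq> B" using B x cl_self by blast
        moreover have "g x \<in> cl x" using cl_mem[of x 1] x B by auto
        ultimately show ?thesis using x by blast
      qed (use x in simp)
    qed
    have "card (g ` B) = card B" using card_image inj_on_subset[OF inj] B by blast
    thus "g ` B = B" using card_subset_eq[OF finite_subset[OF _ fU] sub] B by blast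
  qed
  have "card {B. B \<subseteq> U \<and> card B = r \<and> g ` B = B} =
    (\<Sum>t=0..r. (card Fx choose t) * card {Q'. Q' \<subseteq> Q \<and> L * card Q' = r - t})"
    unfolding seteq by (rule count_unions[OF fU FU QU cL L dj])
  also have "\<dots> = (\<Sum>t=0..r. (card Fx choose t) * binq ((card U - card Fx) div L) ((of_nat r - of_nat t) / of_nat L))"
  proof (rule sum.cong)
    fix t assume t: "t \<in> {0..r}"
    have e: "(of_nat r - of_nat t :: rat) = of_nat (r - t)" using t by (simp add: of_nat_diff)
    show "(card Fx choose t) * card {Q'. Q' \<subseteq> Q \<and> L * card Q' = r - t} =
      (card Fx choose t) * binq ((card U - card Fx) div L) ((of_nat r - of_nat t) / of_nat L)"
      unfolding e using card_C[OF L fQ, of "r - t"] cQ by (simp only:)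
  qed (rule refl)
  finally show ?thesis by (simp only: Fx_def)
qed


definition fl :: "nat \<Rightarrow> bool \<Rightarrow> nat \<Rightarrow> nat" where
  "fl n a p = (if a then n - 1 - p else p)"

definition Tr :: "nat \<Rightarrow> bool \<times> bool \<times> bool \<Rightarrow> nat \<times> nat \<Rightarrow> nat \<times> nat" where
  "Tr n = (\<lambda>(s,a,b) (i,j). (fl n a (if s then j else i), fl n b (if s then i else j)))"

lemma Tr_grid: "x \<in> grid n \<Longrightarrow> Tr n t x \<in> grid n"
  by (cases x; cases t) (auto simp: Tr_def fl_def grid_def)

lemma Tr_inv: "\<exists>t'. \<forall>x\<in>grid n. Tr n t' (Tr n t x) = x \<and> Tr n t (Tr n t' x) = x"
proof -
  obtain s a b where t: "t = (s,a,b)" by (cases t) auto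
  show ?thesis
    by (rule exI[of _ "if s then (s,b,a) else (s,a,b)"]) (auto simp: t Tr_def fl_def grid_def)
qed

lemma Tr_inj: "inj_on (Tr n t) (grid n)"
  using Tr_inv[of n t] by (metis inj_onI)

lemma card_grid: "card (grid n) = n^2"
  by (simp add: grid_def card_cartesian_product power2_eq_square)

lemma fix_Tr:
  assumes L: "L > 0" and gL: "\<forall>x\<in>grid n. (Tr n t ^^ L) x = x"
    and cls: "\<forall>x\<in>grid n. Tr n t x \<noteq> x \<longrightarrow> card ((\<lambda>j. (Tr n t ^^ j) x) ` {..<L}) = L"
    and F: "card {x\<in>grid n. Tr n t x = x} = F"
  shows "card {B \<in> boards n r. Tr n t ` B = B} =
    (\<Sum>t=0..r. (F choose t) * binq ((n^2 - F) div L) ((of_nat r - of_nat t) / of_nat L))"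
proof -
  have "{B \<in> boards n r. Tr n t ` B = B} = {B. B \<subseteq> grid n \<and> card B = r \<and> Tr n t ` B = B}"
    by (auto simp: boards_def)
  moreover have "finite (grid n)" by (simp add: grid_def)
  ultimately show ?thesis
    using fix_count[of "grid n" "Tr n t" L r] Tr_grid Tr_inj L gL cls F card_grid by simp
qed

lemma img2: "(\<lambda>j. (f^^j) x) ` {..<2} = {x, f x}"
proof -
  have "{..<2::nat} = {0,1}" by auto
  thus ?thesis by simp
qed

lemma img4: "(\<lambda>j. (f^^j) x) ` {..<4} = {x, f x, f (f x), f (f (f x))}"
proof -
  have "{..<4::nat} = {0,1,2,3}" by auto
  thus ?thesis by (simp add: numeral_eq_Suc)
qed

lemma card4: "a \<noteq> b \<Longrightarrow> a \<noteq> c \<Longrightarrow> a \<noteq> d \<Longrightarrow> b \<noteq> c \<Longrightarrow> b \<noteq> d \<Longrightarrow> c \<noteq> d \<Longrightarrow> card {a,b,c,d} = 4"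
  by simp

lemma rot90_fix:
  "card {B \<in> boards (2*k+1) r. Tr (2*k+1) (True,False,True) ` B = B} =
    (\<Sum>t=0..r. (1 choose t) * binq (k*(k+1)) ((of_nat r - of_nat t) / 4))"
proof -
  define n where "n = 2*k+1"
  define g where "g = Tr n (True,False,True)"
  have g: "g (i,j) = (j, n-1-i)" for i j by (simp add: g_def Tr_def fl_def)
  have gL: "\<forall>x\<in>grid n. (g ^^ 4) x = x"
    by (auto simp: g grid_def numeral_eq_Suc)
  have cls: "\<forall>x\<in>grid n. g x \<noteq> x \<longrightarrow> card ((\<lambda>j. (g ^^ j) x) ` {..<4}) = 4"
  proof (intro ballI impI)
    fix x assume x: "x \<in> grid n" and gx: "g x \<noteq> x"
    obtain i j where ij: "x = (i,j)" "i < n" "j < n" using x by (auto simp: grid_def)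
    show "card ((\<lambda>j. (g ^^ j) x) ` {..<4}) = 4" unfolding img4
      using gx ij by (intro card4) (auto simp: g n_def)
  qed
  have F: "card {x\<in>grid n. g x = x} = 1"
  proof -
    have "{x\<in>grid n. g x = x} = {(k,k)}" using n_def[symmetric] by (auto simp: g grid_def)
    thus ?thesis by simp
  qed
  have m: "(n^2 - 1) div 4 = k*(k+1)"
  proof -
    have "n^2 - 1 = 4*(k*(k+1))" by (simp add: n_def power2_eq_square algebra_simps)
    thus ?thesis by simp
  qed
  have X: "card {B \<in> boards n r. Tr n (True,False,True) ` B = B} =
    (\<Sum>t=0..r. (1 choose t) * binq ((n^2 - 1) div 4) ((of_nat r - of_nat t) / of_nat 4))"
    by (rule fix_Tr) (use gL cls F in \<open>simp_all add: g_def\<close>)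
  show ?thesis using X[unfolded m] unfolding n_def by simp
qed

lemma inv_fix:
  assumes inv: "\<forall>x\<in>grid n. Tr n t (Tr n t x) = x" and F: "card {x\<in>grid n. Tr n t x = x} = F"
  shows "card {B \<in> boards n r. Tr n t ` B = B} =
    (\<Sum>t=0..r. (F choose t) * binq ((n^2 - F) div 2) ((of_nat r - of_nat t) / of_nat 2))"
proof (rule fix_Tr[OF _ _ _ F])
  show "\<forall>x\<in>grid n. (Tr n t ^^ 2) x = x" using inv by (simp add: numeral_eq_Suc)
  show "\<forall>x\<in>grid n. Tr n t x \<noteq> x \<longrightarrow> card ((\<lambda>j. (Tr n t ^^ j) x) ` {..<2}) = 2"
    unfolding img2 by auto
qed simp

lemma fx1: "m = 2*k+1 \<Longrightarrow> i < m \<Longrightarrow> (Tr m (False,True,False) (i,j) = (i,j)) \<longleftrightarrow> i = k"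
  by (simp add: Tr_def fl_def) arith
lemma fx2: "m = 2*k+1 \<Longrightarrow> j < m \<Longrightarrow> (Tr m (False,False,True) (i,j) = (i,j)) \<longleftrightarrow> j = k"
  by (simp add: Tr_def fl_def) arith
lemma fx3: "(Tr m (True,False,False) (i,j) = (i,j)) \<longleftrightarrow> j = i"
  by (simp add: Tr_def fl_def) blast
lemma fx4: "m = 2*k+1 \<Longrightarrow> i < m \<Longrightarrow> j < m \<Longrightarrow> (Tr m (True,True,True) (i,j) = (i,j)) \<longleftrightarrow> j = 2*k - i"
  by (simp add: Tr_def fl_def) arith
lemma fx5: "m = 2*k+1 \<Longrightarrow> i < m \<Longrightarrow> j < m \<Longrightarrow> (Tr m (False,True,True) (i,j) = (i,j)) \<longleftrightarrow> i = k \<and> j = k"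
  by (simp add: Tr_def fl_def) arith

lemma refl_m: "((2*(k::nat)+1)^2 - (2*k+1)) div 2 = k*(2*k+1)"
proof -
  have "(2*k+1)^2 = (2*k+1) + 2*(k*(2*k+1))" by (simp add: power2_eq_square algebra_simps)
  thus ?thesis by simp
qed

lemma rot_m: "((2*(k::nat)+1)^2 - 1) div 2 = 2*k*(k+1)"
proof -
  have "(2*k+1)^2 = 1 + 2*(2*k*(k+1))" by (simp add: power2_eq_square algebra_simps)
  thus ?thesis by simp
qed

lemma refl1_fix:
  "card {B \<in> boards (2*k+1) r. Tr (2*k+1) (False,True,False) ` B = B} =
    (\<Sum>t=0..r. ((2*k+1) choose t) * binq (k*(2*k+1)) ((of_nat r - of_nat t) / 2))"
proof -
  have g: "Tr m (False,True,False) (i,j) = (m-1-i, j)" for m i j by (simp add: Tr_def fl_def)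
  have inv: "\<forall>x\<in>grid (2*k+1). Tr (2*k+1) (False,True,False) (Tr (2*k+1) (False,True,False) x) = x"
    by (auto simp: g grid_def)
  have "{x\<in>grid (2*k+1). Tr (2*k+1) (False,True,False) x = x} = {k} \<times> {0..<2*k+1}"
    by (auto simp: grid_def fx1)
  hence F: "card {x\<in>grid (2*k+1). Tr (2*k+1) (False,True,False) x = x} = 2*k+1"
    by (simp add: card_cartesian_product)
  show ?thesis using inv_fix[OF inv F, of r] unfolding refl_m by simp
qed

lemma refl2_fix:
  "card {B \<in> boards (2*k+1) r. Tr (2*k+1) (False,False,True) ` B = B} =
    (\<Sum>t=0..r. ((2*k+1) choose t) * binq (k*(2*k+1)) ((of_nat r - of_nat t) / 2))"
proof -
  have g: "Tr m (False,False,True) (i,j) = (i, m-1-j)" for m i j by (simp add: Tr_def fl_def)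
  have inv: "\<forall>x\<in>grid (2*k+1). Tr (2*k+1) (False,False,True) (Tr (2*k+1) (False,False,True) x) = x"
    by (auto simp: g grid_def)
  have "{x\<in>grid (2*k+1). Tr (2*k+1) (False,False,True) x = x} = {0..<2*k+1} \<times> {k}"
    by (auto simp: grid_def fx2)
  hence F: "card {x\<in>grid (2*k+1). Tr (2*k+1) (False,False,True) x = x} = 2*k+1"
    by (simp add: card_cartesian_product)
  show ?thesis using inv_fix[OF inv F, of r] unfolding refl_m by simp
qed

lemma refl3_fix:
  "card {B \<in> boards (2*k+1) r. Tr (2*k+1) (True,False,False) ` B = B} =
    (\<Sum>t=0..r. ((2*k+1) choose t) * binq (k*(2*k+1)) ((of_nat r - of_nat t) / 2))"
proof -
  have g: "Tr m (True,False,False) (i,j) = (j, i)" for m i j by (simp add: Tr_def fl_def)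
  have inv: "\<forall>x\<in>grid (2*k+1). Tr (2*k+1) (True,False,False) (Tr (2*k+1) (True,False,False) x) = x"
    by (auto simp: g grid_def)
  have "{x\<in>grid (2*k+1). Tr (2*k+1) (True,False,False) x = x} = (\<lambda>i. (i,i)) ` {0..<2*k+1}"
    by (auto simp: grid_def fx3)
  hence F: "card {x\<in>grid (2*k+1). Tr (2*k+1) (True,False,False) x = x} = 2*k+1"
    by (simp add: card_image inj_on_def)
  show ?thesis using inv_fix[OF inv F, of r] unfolding refl_m by simp
qed

lemma refl4_fix:
  "card {B \<in> boards (2*k+1) r. Tr (2*k+1) (True,True,True) ` B = B} =
    (\<Sum>t=0..r. ((2*k+1) choose t) * binq (k*(2*k+1)) ((of_nat r - of_nat t) / 2))"
proof -
  have g: "Tr m (True,True,True) (i,j) = (m-1-j, m-1-i)" for m i j by (simp add: Tr_def fl_def)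
  have inv: "\<forall>x\<in>grid (2*k+1). Tr (2*k+1) (True,True,True) (Tr (2*k+1) (True,True,True) x) = x"
    by (auto simp: g grid_def)
  have "{x\<in>grid (2*k+1). Tr (2*k+1) (True,True,True) x = x} = (\<lambda>i. (i,2*k-i)) ` {0..<2*k+1}"
    by (auto simp: grid_def fx4)
  hence F: "card {x\<in>grid (2*k+1). Tr (2*k+1) (True,True,True) x = x} = 2*k+1"
    by (simp add: card_image inj_on_def)
  show ?thesis using inv_fix[OF inv F, of r] unfolding refl_m by simp
qed

lemma rot180_fix:
  "card {B \<in> boards (2*k+1) r. Tr (2*k+1) (False,True,True) ` B = B} =
    (\<Sum>t=0..r. (1 choose t) * binq (2*k*(k+1)) ((of_nat r - of_nat t) / 2))"
proof -
  have g: "Tr m (False,True,True) (i,j) = (m-1-i, m-1-j)" for m i j by (simp add: Tr_def fl_def)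
  have inv: "\<forall>x\<in>grid (2*k+1). Tr (2*k+1) (False,True,True) (Tr (2*k+1) (False,True,True) x) = x"
    by (auto simp: g grid_def)
  have "{x\<in>grid (2*k+1). Tr (2*k+1) (False,True,True) x = x} = {(k,k)}"
    by (auto simp: grid_def fx5)
  hence F: "card {x\<in>grid (2*k+1). Tr (2*k+1) (False,True,True) x = x} = 1"
    by simp
  show ?thesis using inv_fix[OF inv F, of r] unfolding rot_m by simp
qed

lemma rot270_fix:
  "card {B \<in> boards (2*k+1) r. Tr (2*k+1) (True,True,False) ` B = B} =
    (\<Sum>t=0..r. (1 choose t) * binq (k*(k+1)) ((of_nat r - of_nat t) / 4))"
proof -
  define n where "n = 2*k+1"
  define g where "g = Tr n (True,True,False)"
  have g: "g (i,j) = (n-1-j, i)" for i j by (simp add: g_def Tr_def fl_def)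
  have gL: "\<forall>x\<in>grid n. (g ^^ 4) x = x"
    by (auto simp: g grid_def numeral_eq_Suc)
  have cls: "\<forall>x\<in>grid n. g x \<noteq> x \<longrightarrow> card ((\<lambda>j. (g ^^ j) x) ` {..<4}) = 4"
  proof (intro ballI impI)
    fix x assume x: "x \<in> grid n" and gx: "g x \<noteq> x"
    obtain i j where ij: "x = (i,j)" "i < n" "j < n" using x by (auto simp: grid_def)
    show "card ((\<lambda>j. (g ^^ j) x) ` {..<4}) = 4" unfolding img4
      using gx ij by (intro card4) (auto simp: g n_def)
  qed
  have F: "card {x\<in>grid n. g x = x} = 1"
  proof -
    have "{x\<in>grid n. g x = x} = {(k,k)}" using n_def[symmetric] by (auto simp: g grid_def)
    thus ?thesis by simp
  qed
  have m: "(n^2 - 1) div 4 = k*(k+1)"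
  proof -
    have "n^2 - 1 = 4*(k*(k+1))" by (simp add: n_def power2_eq_square algebra_simps)
    thus ?thesis by simp
  qed
  have X: "card {B \<in> boards n r. Tr n (True,True,False) ` B = B} =
    (\<Sum>t=0..r. (1 choose t) * binq ((n^2 - 1) div 4) ((of_nat r - of_nat t) / of_nat 4))"
    by (rule fix_Tr) (use gL cls F in \<open>simp_all add: g_def\<close>)
  show ?thesis using X[unfolded m] unfolding n_def by simp
qed

lemma id_fix:
  "card {B \<in> boards n r. Tr n (False,False,False) ` B = B} = (n^2 choose r)"
proof -
  have "Tr n (False,False,False) ` B = B" for B by (simp add: Tr_def fl_def case_prod_unfold)
  hence "{B \<in> boards n r. Tr n (False,False,False) ` B = B} = {B. B \<subseteq> grid n \<and> card B = r}"
    by (simp add: boards_def)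
  thus ?thesis by (simp add: n_subsets grid_def card_grid[unfolded grid_def])
qed


definition tm :: "bool \<times> bool \<times> bool \<Rightarrow> bool \<times> bool \<times> bool \<Rightarrow> bool \<times> bool \<times> bool" where
  "tm = (\<lambda>(s,a,b) (s',a',b'). (s \<noteq> s', if s then a \<noteq> b' else a \<noteq> a', if s then b \<noteq> a' else b \<noteq> b'))"

definition DG :: "(bool \<times> bool \<times> bool) monoid" where
  "DG = \<lparr>carrier = UNIV, mult = tm, one = (False,False,False)\<rparr>"

lemma group_DG: "group DG"
proof (rule groupI)
  fix x assume "x \<in> carrier DG"
  obtain s a b where x: "x = (s,a,b)" by (cases x) auto
  show "\<exists>y\<in>carrier DG. y \<otimes>\<^bsub>DG\<^esub> x = \<one>\<^bsub>DG\<^esub>"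
    by (rule bexI[of _ "if s then (s,b,a) else (s,a,b)"]) (auto simp: DG_def tm_def x)
qed (auto simp: DG_def tm_def split: prod.splits)

lemma D4_Tr: "D4 n = range (Tr n)"
proof -
  have U: "(UNIV :: (bool \<times> bool \<times> bool) set) = {(False,False,False),(True,False,True),(False,True,True),(True,True,False),
     (False,True,False),(False,False,True),(True,False,False),(True,True,True)}"
    by auto
  show ?thesis unfolding U D4_def
    by (simp add: Tr_def fl_def)
qed

lemma Tr_comp: "x \<in> grid n \<Longrightarrow> Tr n t (Tr n t' x) = Tr n (tm t t') x"
  by (cases x; cases t; cases t') (auto simp: Tr_def fl_def grid_def tm_def)

lemma Tr_one: "Tr n (False,False,False) x = x"
  by (cases x) (auto simp: Tr_def fl_def)

lemma Tr_boards:
  assumes "B \<in> boards n r" shows "Tr n t ` B \<in> boards n r"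
proof -
  have B: "B \<subseteq> grid n" "card B = r" using assms by (auto simp: boards_def)
  have "Tr n t ` B \<subseteq> grid n" using B(1) Tr_grid by blast
  moreover have "card (Tr n t ` B) = r" using card_image[OF inj_on_subset[OF Tr_inj B(1)]] B(2) by simp
  ultimately show ?thesis by (simp add: boards_def)
qed

definition act :: "nat \<Rightarrow> nat \<Rightarrow> bool \<times> bool \<times> bool \<Rightarrow> (nat \<times> nat) set \<Rightarrow> (nat \<times> nat) set" where
  "act n r t = (\<lambda>B\<in>boards n r. Tr n t ` B)"

lemma act_Bij: "act n r t \<in> Bij (boards n r)"
proof -
  obtain t' where t': "\<forall>x\<in>grid n. Tr n t' (Tr n t x) = x \<and> Tr n t (Tr n t' x) = x"
    using Tr_inv by blast
  have "bij_betw (act n r t) (boards n r) (boards n r)"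
  proof (rule bij_betw_byWitness[where f' = "act n r t'"])
    show "\<forall>a\<in>boards n r. act n r t' (act n r t a) = a"
    proof
      fix B assume B: "B \<in> boards n r"
      hence "B \<subseteq> grid n" by (simp add: boards_def)
      hence "Tr n t' ` Tr n t ` B = B" using t' by (force simp: image_image)
      thus "act n r t' (act n r t B) = B" using B Tr_boards by (simp add: act_def)
    qed
    show "\<forall>a\<in>boards n r. act n r t (act n r t' a) = a"
    proof
      fix B assume B: "B \<in> boards n r"
      hence "B \<subseteq> grid n" by (simp add: boards_def)
      hence "Tr n t ` Tr n t' ` B = B" using t' by (force simp: image_image)
      thus "act n r t (act n r t' B) = B" using B Tr_boards by (simp add: act_def)
    qed
  qed (auto simp: act_def Tr_boards)
  thus ?thesis by (simp add: Bij_def act_def)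
qed

lemma act_ga: "group_action DG (boards n r) (act n r)"
  unfolding group_action_def group_hom_def group_hom_axioms_def
proof (intro conjI)
  show "group DG" by (rule group_DG)
  show "group (BijGroup (boards n r))" by (rule group_BijGroup)
  show "act n r \<in> hom DG (BijGroup (boards n r))"
    unfolding hom_def
  proof (intro CollectI conjI ballI)
    show "act n r \<in> carrier DG \<rightarrow> carrier (BijGroup (boards n r))"
      by (simp add: BijGroup_def act_Bij)
    fix x y assume "x \<in> carrier DG" "y \<in> carrier DG"
    have "act n r (tm x y) = compose (boards n r) (act n r x) (act n r y)"
    proof (rule ext)
      fix B show "act n r (tm x y) B = compose (boards n r) (act n r x) (act n r y) B"
      proof (cases "B \<in> boards n r")
        case True
        hence "B \<subseteq> grid n" by (simp add: boards_def)
        hence "Tr n (tm x y) ` B = Tr n x ` Tr n y ` B"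
          unfolding image_image by (intro image_cong refl) (metis Tr_comp subsetD)
        thus ?thesis using True Tr_boards by (simp add: act_def compose_def)
      qed (simp add: act_def compose_def)
    qed
    thus "act n r (x \<otimes>\<^bsub>DG\<^esub> y) = act n r x \<otimes>\<^bsub>BijGroup (boards n r)\<^esub> act n r y"
      by (simp add: DG_def BijGroup_def act_Bij)
  qed
qed

lemma orbits_eq: "Defs.orbits n r = Group_Action.orbits DG (boards n r) (act n r)"
proof -
  have "Defs.orbit n B = Group_Action.orbit DG (act n r) B" if "B \<in> boards n r" for B
    using that by (auto simp: Defs.orbit_def Group_Action.orbit_def D4_Tr act_def DG_def)
  thus ?thesis by (auto simp: Defs.orbits_def Group_Action.orbits_def)
qed

lemma burnside_D4:
  "card (Defs.orbits n r) * 8 = (\<Sum>t\<in>UNIV. card {B \<in> boards n r. Tr n t ` B = B})"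
proof -
  have fin: "finite (boards n r)" unfolding boards_def grid_def
    by (rule finite_subset[of _ "Pow ({0..<n} \<times> {0..<n})"]) auto
  have "card (UNIV::(bool\<times>bool\<times>bool) set) = card (UNIV::bool set) * (card (UNIV::bool set) * card (UNIV::bool set))"
    by (metis card_cartesian_product UNIV_Times_UNIV)
  hence o: "order DG = 8" by (simp add: order_def DG_def card_UNIV_bool)
  have "invariants (boards n r) (act n r) t = {B \<in> boards n r. Tr n t ` B = B}" for t
    by (auto simp: invariants_def act_def)
  thus ?thesis using group_action.burnside[OF act_ga, of n r] fin o orbits_eq
    by (simp add: DG_def)
qed


lemma sum_UNIV3:
  fixes h :: "bool \<times> bool \<times> bool \<Rightarrow> nat"
  shows "(\<Sum>t\<in>UNIV. h t) = h (False,False,False) + h (True,False,True) + h (True,True,False) +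
     h (False,True,True) + h (False,True,False) + h (False,False,True) + h (True,False,False) + h (True,True,True)"
proof -
  have U: "(UNIV :: (bool \<times> bool \<times> bool) set) = {(False,False,False),(True,False,True),(True,True,False),
     (False,True,True),(False,True,False),(False,False,True),(True,False,False),(True,True,True)}"
    by auto
  show ?thesis unfolding U by (simp add: add.assoc)
qed

lemma sum_one:
  fixes f :: "nat \<Rightarrow> nat"
  assumes "r \<ge> 1"
  shows "(\<Sum>t=0..r. (1 choose t) * f t) = f 0 + f 1"
  using assms
proof (induction r)
  case (Suc r)
  show ?case
  proof (cases "r = 0")
    case True thus ?thesis by simp
  next
    case False
    hence "(\<Sum>t=0..r. (1 choose t) * f t) = f 0 + f 1" using Suc by simp
    moreover have "(1 choose Suc r) = 0" using False by (simp add: binomial_eq_0)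
    ultimately show ?thesis by (simp add: sum.atLeast0_atMost_Suc)
  qed
qed simp

lemma binq_div:
  assumes L: "L > 0"
  shows "binq a (of_nat m / of_nat L) = (if L dvd m then a choose (m div L) else 0)"
proof (cases "L dvd m")
  case True
  then obtain d where d: "m = L * d" by blast
  have "(of_nat m / of_nat L :: rat) = of_nat d" using d L by simp
  thus ?thesis using True d L by (simp add: binq_def)
next
  case False
  have nZ: "(of_nat m / of_nat L :: rat) \<notin> \<int>"
  proof
    assume "(of_nat m / of_nat L :: rat) \<in> \<int>"
    then obtain z where z: "(of_nat m / of_nat L :: rat) = of_int z" by (auto elim: Ints_cases)
    hence "(of_nat m :: rat) = of_int z * of_nat L" using L by (simp add: divide_eq_eq)
    hence "int m = z * int L" by (metis of_int_eq_iff of_int_mult of_int_of_nat_eq)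
    hence "int L dvd int m" by simp
    thus False using False by simp
  qed
  show ?thesis using nZ False by (simp add: binq_def)
qed

lemma rot180_val:
  assumes r: "r \<ge> 1"
  shows "binq M (of_nat r / 2) + binq M ((of_nat r - 1) / 2) = (M choose (r div 2))"
proof -
  have hb: "binq a (of_nat m / of_nat 2) = (if 2 dvd m then a choose (m div 2) else 0)" for a m
    by (rule binq_div) simp
  have e1: "(of_nat r / 2 :: rat) = of_nat r / of_nat 2" by simp
  have e2: "((of_nat r - 1) / 2 :: rat) = of_nat (r - 1) / of_nat 2" using r by (simp add: of_nat_diff)
  show ?thesis
  proof (cases "even r")
    case True
    then obtain q where q: "r = 2*q" by blast
    have "\<not> 2 dvd (r - 1)" using q r by presburger
    thus ?thesis unfolding e1 e2 hb using True q by simp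
  next
    case False
    then obtain q where q: "r = 2*q + 1" using oddE by blast
    have "2 dvd (r - 1)" "(r - 1) div 2 = q" "r div 2 = q" using q by simp_all
    thus ?thesis unfolding e1 e2 hb using False by simp
  qed
qed

theorem proposition5p2:
  fixes k r :: nat
  assumes "k \<ge> 1" and "1 \<le> r" and "r \<le> (2*k+1)^2"
  shows "(of_nat (card (orbits (2*k+1) r)) :: rat) =
    1/8 * (of_nat ((2*k+1)^2 choose r)
      + 2 * of_nat (binq (k*(k+1)) (of_nat r / 4))
      + 2 * of_nat (binq (k*(k+1)) ((of_nat r - 1) / 4))
      + of_nat (2*k*(k+1) choose (r div 2))
      + 4 * (\<Sum>t=0..r. of_nat ((2*k+1) choose t) * of_nat (binq (k*(2*k+1)) ((of_nat r - of_nat t) / 2))))"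
proof -
  define h where "h t = card {B \<in> boards (2*k+1) r. Tr (2*k+1) t ` B = B}" for t
  define A4 where "A4 = binq (k*(k+1)) (of_nat r / 4) + binq (k*(k+1)) ((of_nat r - 1) / 4)"
  define S where "S = (\<Sum>t=0..r. ((2*k+1) choose t) * binq (k*(2*k+1)) ((of_nat r - of_nat t) / 2))"
  have B: "card (orbits (2*k+1) r) * 8 = (\<Sum>t\<in>UNIV. h t)"
    unfolding h_def by (rule burnside_D4)
  have h1: "h (False,False,False) = ((2*k+1)^2 choose r)" unfolding h_def by (rule id_fix)
  have h2: "h (True,False,True) = A4"
    unfolding h_def rot90_fix A4_def using sum_one[OF assms(2)] by simp
  have h3: "h (True,True,False) = A4"
    unfolding h_def rot270_fix A4_def using sum_one[OF assms(2)] by simp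
  have h4: "h (False,True,True) = (2*k*(k+1) choose (r div 2))"
    unfolding h_def rot180_fix using sum_one[OF assms(2)] rot180_val[OF assms(2)] by simp
  have h5: "h (False,True,False) = S" unfolding h_def S_def by (rule refl1_fix)
  have h6: "h (False,False,True) = S" unfolding h_def S_def by (rule refl2_fix)
  have h7: "h (True,False,False) = S" unfolding h_def S_def by (rule refl3_fix)
  have h8: "h (True,True,True) = S" unfolding h_def S_def by (rule refl4_fix)
  have N: "card (orbits (2*k+1) r) * 8 = ((2*k+1)^2 choose r) + 2 * A4 + (2*k*(k+1) choose (r div 2)) + 4 * S"
    using B unfolding sum_UNIV3 h1 h2 h3 h4 h5 h6 h7 h8 by simp
  hence "(of_nat (card (orbits (2*k+1) r)) :: rat) * 8 =
     of_nat ((2*k+1)^2 choose r) + 2 * of_nat A4 + of_nat (2*k*(k+1) choose (r div 2)) + 4 * of_nat S"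
    by (metis (mono_tags) of_nat_add of_nat_mult of_nat_numeral)
  moreover have "(of_nat S :: rat) = (\<Sum>t=0..r. of_nat ((2*k+1) choose t) * of_nat (binq (k*(2*k+1)) ((of_nat r - of_nat t) / 2)))"
    unfolding S_def by simp
  moreover have "(of_nat A4 :: rat) = of_nat (binq (k*(k+1)) (of_nat r / 4)) + of_nat (binq (k*(k+1)) ((of_nat r - 1) / 4))"
    unfolding A4_def by simp
  ultimately show ?thesis by (simp add: algebra_simps)
qed

end
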